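(* Let $M,K,N\ge 1$ be integers, let $\mathcal{S}\subseteq\{1,\dots,M\}$ be a fixed nonempty set of participating devices, and let $\sigma_h^2>0$, $\bar\beta>0$ and $\beta_m>0$ ($m\in\mathcal{S}$) be constants. For each $m\in\mathcal{S}$ let $\Delta\bm{\theta}_m=(\Delta\theta_m^1,\dots,\Delta\theta_m^{2N})\in\mathbb{R}^{2N}$ be a random vector with $\mathbb{E}\|\Delta\bm{\theta}_m\|_2^2<\infty$, and let $C_m=p_m c_m$ with $p_m>0$ and $c_m$ a (possibly random) positive integer; set $C=\sum_{m\in\mathcal{S}}C_m$. For $n\in\{1,\dots,N\}$ define the complex symbol $\Delta\theta_{m}^{s,cx,n}=C_m\big(\Delta\theta_m^{n}+j\,\Delta\theta_m^{n+N}\big)$. Let the channel coefficients be $h_{m,k}^n=\sqrt{\beta_m}\,g_{m,k}^n$ for $m\in\mathcal{S}$, $k\in\{1,\dots,K\}$, $n\in\{1,\dots,N\}$, where the $g_{m,k}^n$ are i.i.d. circularly symmetric complex Gaussian $\mathcal{CN}(0,\sigma_h^2)$ and the whole family $\{g_{m,k}^n\}$ is independent of $\{\Delta\bm{\theta}_m, c_m\}_{m\in\mathcal{S}}$. Define the interference term $$y^{n,int}=\frac{1}{K}\sum_{m\in\mathcal{S}}\sum_{\substack{m'\in\mathcal{S}\\ m'\neq m}}\sum_{k=1}^{K}\big(h_{m,k}^n\big)^{*}h_{m',k}^n\,\Delta\theta_{m'}^{s,cx,n},$$ and for $n\in\{1,\dots,N\}$ set $\Delta\hat\theta_{PS,2}^{n}=\frac{1}{C\sigma_h^2\bar\beta}\operatorname{Re}\{y^{n,int}\}$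 and $\Delta\hat\theta_{PS,2}^{n+N}=\frac{1}{C\sigma_h^2\bar\beta}\operatorname{Im}\{y^{n,int}\}$. Then $$\sum_{n=1}^{2N}\mathbb{E}\Big[\big(\Delta\hat\theta_{PS,2}^{n}\big)^2\Big]\le\sum_{m\in\mathcal{S}}\sum_{\substack{m'\in\mathcal{S}\\ m'\neq m}}\frac{\beta_m\beta_{m'}}{K\bar\beta^2}\,\mathbb{E}\big[\|\Delta\bm{\theta}_{m'}\|_2^2\big].$$
   Context: Setting: over-the-air federated learning with $M$ single-antenna energy-harvesting devices and a parameter server (PS) with $K$ antennas. $\mathcal{S}$ is the set of devices participating in the current global iteration; $\Delta\bm{\theta}_m$ is the local model difference of device $m$; $p_m$ is the fraction of data held by device $m$ and $c_m$ is its cooldown multiplier (number of iterations since its previous energy arrival), so the device transmits the scaled update $C_m\Delta\bm{\theta}_m$, grouping the first $N$ real coordinates as real parts and the last $N$ as imaginary parts of $N$ complex symbols. $\beta_m$ is the large-scale fading coefficient of device $m$, and $\bar\beta>0$ is a fixed normalization constant used by the PS. $j$ denotes the imaginary unit and $^{*}$ complex conjugation. *)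

theory Defs
  imports "HOL-Probability.Probability"
begin

definition cn_density :: "real \<Rightarrow> complex \<Rightarrow> ennreal" where
  "cn_density s2 z = ennreal (exp (- (cmod z)\<^sup>2 / s2) / (pi * s2))"

definition Ctot :: "nat set \<Rightarrow> (nat \<Rightarrow> real) \<Rightarrow> (nat \<Rightarrow> 'a \<Rightarrow> nat) \<Rightarrow> 'a \<Rightarrow> real" where
  "Ctot S p c \<omega> = (\<Sum>m\<in>S. p m * real (c m \<omega>))"

definition sym_cx :: "nat \<Rightarrow> (nat \<Rightarrow> real) \<Rightarrow> (nat \<Rightarrow> 'a \<Rightarrow> nat) \<Rightarrow> (nat \<Rightarrow> nat \<Rightarrow> 'a \<Rightarrow> real)
    \<Rightarrow> nat \<Rightarrow> nat \<Rightarrow> 'a \<Rightarrow> complex" where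
  "sym_cx N p c \<theta> m n \<omega> =
     complex_of_real (p m * real (c m \<omega>)) *
     (complex_of_real (\<theta> m n \<omega>) + \<i> * complex_of_real (\<theta> m (n + N) \<omega>))"

definition chan :: "(nat \<Rightarrow> real) \<Rightarrow> (nat \<Rightarrow> nat \<Rightarrow> nat \<Rightarrow> 'a \<Rightarrow> complex) \<Rightarrow> nat \<Rightarrow> nat \<Rightarrow> nat \<Rightarrow> 'a \<Rightarrow> complex" where
  "chan \<beta> g m k n \<omega> = complex_of_real (sqrt (\<beta> m)) * g m k n \<omega>"

definition y_int :: "nat set \<Rightarrow> nat \<Rightarrow> nat \<Rightarrow> (nat \<Rightarrow> real) \<Rightarrow> (nat \<Rightarrow> real) \<Rightarrow> (nat \<Rightarrow> 'a \<Rightarrow> nat)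
    \<Rightarrow> (nat \<Rightarrow> nat \<Rightarrow> 'a \<Rightarrow> real) \<Rightarrow> (nat \<Rightarrow> nat \<Rightarrow> nat \<Rightarrow> 'a \<Rightarrow> complex) \<Rightarrow> nat \<Rightarrow> 'a \<Rightarrow> complex" where
  "y_int S K N \<beta> p c \<theta> g n \<omega> =
     (1 / of_nat K) *
     (\<Sum>m\<in>S. \<Sum>m'\<in>S - {m}. \<Sum>k=1..K.
        cnj (chan \<beta> g m k n \<omega>) * chan \<beta> g m' k n \<omega> * sym_cx N p c \<theta> m' n \<omega>)"

definition est :: "nat set \<Rightarrow> nat \<Rightarrow> nat \<Rightarrow> real \<Rightarrow> real \<Rightarrow> (nat \<Rightarrow> real) \<Rightarrow> (nat \<Rightarrow> real)
    \<Rightarrow> (nat \<Rightarrow> 'a \<Rightarrow> nat) \<Rightarrow> (nat \<Rightarrow> nat \<Rightarrow> 'a \<Rightarrow> real) \<Rightarrow> (nat \<Rightarrow> nat \<Rightarrow> nat \<Rightarrow> 'a \<Rightarrow> complex)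
    \<Rightarrow> nat \<Rightarrow> 'a \<Rightarrow> real" where
  "est S K N s2 \<beta>bar \<beta> p c \<theta> g n \<omega> =
     (if n \<le> N then Re (y_int S K N \<beta> p c \<theta> g n \<omega>)
      else Im (y_int S K N \<beta> p c \<theta> g (n - N) \<omega>)) / (Ctot S p c \<omega> * s2 * \<beta>bar)"

end

theory Submission
  imports Defs
begin

lemma lborel_complex_prod:
  fixes F1 F2 :: "real \<Rightarrow> complex"
  assumes i1: "integrable lborel F1" and i2: "integrable lborel F2"
  shows "integrable lborel (\<lambda>z::complex. F1 (Re z) * F2 (Im z))"
    and "(\<integral>z. F1 (Re z) * F2 (Im z) \<partial>(lborel::complex measure)) = (\<integral>x. F1 x \<partial>lborel) * (\<integral>x. F2 x \<partial>lborel)"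
proof -
  interpret product_sigma_finite "\<lambda>_::complex. (lborel::real measure)" ..
  define G where "G b = (if b = 1 then F1 else F2)" for b :: complex
  have [measurable]: "F1 \<in> borel_measurable borel" "F2 \<in> borel_measurable borel" using i1 i2 by auto
  have eq: "(\<lambda>f. F1 (Re (\<Sum>b\<in>Basis. f b *\<^sub>R b)) * F2 (Im (\<Sum>b\<in>Basis. f b *\<^sub>R b))) = (\<lambda>f. \<Prod>b\<in>Basis. G b (f b))"
    by (auto simp: Basis_complex_def G_def fun_eq_iff)
  have ii: "integrable (Pi\<^sub>M Basis (\<lambda>_. lborel)) (\<lambda>f. \<Prod>b\<in>Basis. G b (f b))"
    by (rule product_integrable_prod) (auto simp: G_def i1 i2)
  have m: "(\<lambda>f. \<Sum>b\<in>Basis. f b *\<^sub>R (b::complex)) \<in> measurable (Pi\<^sub>M Basis (\<lambda>_. lborel)) borel"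
    by measurable
  show "integrable lborel (\<lambda>z::complex. F1 (Re z) * F2 (Im z))"
    apply (subst lborel_eq)
    apply (subst integrable_distr_eq[OF m])
     apply measurable
    using ii eq by simp
  have "(\<integral>z. F1 (Re z) * F2 (Im z) \<partial>(lborel::complex measure)) = (\<integral>f. (\<Prod>b\<in>Basis. G b (f b)) \<partial>(Pi\<^sub>M Basis (\<lambda>_. lborel)))"
    apply (subst lborel_eq)
    apply (subst integral_distr[OF m])
     apply measurable
    using eq by simp
  also have "\<dots> = (\<Prod>b\<in>Basis. integral\<^sup>L lborel (G b))"
    by (rule product_integral_prod) (auto simp: G_def i1 i2)
  also have "\<dots> = (\<integral>x. F1 x \<partial>lborel) * (\<integral>x. F2 x \<partial>lborel)"
    by (simp add: Basis_complex_def G_def)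
  finally show "(\<integral>z. F1 (Re z) * F2 (Im z) \<partial>(lborel::complex measure)) = (\<integral>x. F1 x \<partial>lborel) * (\<integral>x. F2 x \<partial>lborel)" .
qed

lemma normal_facts:
  assumes "\<sigma> > 0"
  shows "integrable lborel (\<lambda>x. complex_of_real (normal_density 0 \<sigma> x))"
    "integrable lborel (\<lambda>x. complex_of_real (x * normal_density 0 \<sigma> x))"
    "integrable lborel (\<lambda>x. complex_of_real (x\<^sup>2 * normal_density 0 \<sigma> x))"
    "(\<integral>x. complex_of_real (normal_density 0 \<sigma> x) \<partial>lborel) = 1"
    "(\<integral>x. complex_of_real (x * normal_density 0 \<sigma> x) \<partial>lborel) = 0"
    "(\<integral>x. complex_of_real (x\<^sup>2 * normal_density 0 \<sigma> x) \<partial>lborel) = complex_of_real (\<sigma>\<^sup>2)"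
proof -
  have a: "integrable lborel (\<lambda>x. normal_density 0 \<sigma> x * (x - 0) ^ k)" for k
    using assms by (rule integrable_normal_moment)
  show "integrable lborel (\<lambda>x. complex_of_real (normal_density 0 \<sigma> x))"
    using a[of 0] by (simp add: complex_of_real_integrable_eq)
  show "integrable lborel (\<lambda>x. complex_of_real (x * normal_density 0 \<sigma> x))"
    using a[of 1] complex_of_real_integrable_eq[of lborel "\<lambda>x. x * normal_density 0 \<sigma> x"] by (simp add: mult.commute)
  show "integrable lborel (\<lambda>x. complex_of_real (x\<^sup>2 * normal_density 0 \<sigma> x))"
    using a[of 2] complex_of_real_integrable_eq[of lborel "\<lambda>x. x\<^sup>2 * normal_density 0 \<sigma> x"] by (simp add: mult.commute)
  show "(\<integral>x. complex_of_real (normal_density 0 \<sigma> x) \<partial>lborel) = 1"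
    using assms by simp
  show "(\<integral>x. complex_of_real (x * normal_density 0 \<sigma> x) \<partial>lborel) = 0"
    using integral_normal_moment_nz_1[OF assms, of 0] by (subst integral_complex_of_real) (simp add: mult.commute)
  have "(\<integral>x. normal_density 0 \<sigma> x * (x - 0) ^ (2 * 1) \<partial>lborel) = fact (2 * 1) / ((2 / \<sigma>\<^sup>2)^1 * fact 1)"
    using assms by (rule integral_normal_moment_even)
  then show "(\<integral>x. complex_of_real (x\<^sup>2 * normal_density 0 \<sigma> x) \<partial>lborel) = complex_of_real (\<sigma>\<^sup>2)"
    using assms by (subst integral_complex_of_real) (simp add: mult.commute)
qed

lemma cnj_measurable[measurable]: "cnj \<in> borel_measurable borel"
  by (rule borel_measurable_continuous_onI) (intro continuous_intros)

lemma hbi_complex_prod: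
  fixes F1 F2 :: "real \<Rightarrow> complex"
  assumes "has_bochner_integral lborel F1 a" "has_bochner_integral lborel F2 b"
  shows "has_bochner_integral (lborel::complex measure) (\<lambda>z. F1 (Re z) * F2 (Im z)) (a * b)"
proof -
  have i: "integrable lborel F1" "integrable lborel F2" and e: "integral\<^sup>L lborel F1 = a" "integral\<^sup>L lborel F2 = b"
    using assms by (auto simp: has_bochner_integral_iff)
  show ?thesis
    using lborel_complex_prod[OF i] e by (simp add: has_bochner_integral_iff)
qed

definition nd :: "real \<Rightarrow> real \<Rightarrow> real" where
  "nd s x = normal_density 0 (sqrt (s / 2)) x"

lemma nd_hbi:
  assumes "s > 0"
  shows "has_bochner_integral lborel (\<lambda>x. complex_of_real (nd s x)) 1"
    "has_bochner_integral lborel (\<lambda>x. complex_of_real (x * nd s x)) 0"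
    "has_bochner_integral lborel (\<lambda>x. complex_of_real (x\<^sup>2 * nd s x)) (complex_of_real (s / 2))"
proof -
  have p: "sqrt (s / 2) > 0" using assms by simp
  have sq: "(sqrt (s / 2))\<^sup>2 = s / 2" using assms by simp
  show "has_bochner_integral lborel (\<lambda>x. complex_of_real (nd s x)) 1"
    using normal_facts[OF p] unfolding nd_def has_bochner_integral_iff sq by blast
  show "has_bochner_integral lborel (\<lambda>x. complex_of_real (x * nd s x)) 0"
    using normal_facts[OF p] unfolding nd_def has_bochner_integral_iff sq by blast
  show "has_bochner_integral lborel (\<lambda>x. complex_of_real (x\<^sup>2 * nd s x)) (complex_of_real (s / 2))"
    using normal_facts[OF p] unfolding nd_def has_bochner_integral_iff sq by blast
qed

lemma cn_density_eq:
  assumes "s > 0"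
  shows "cn_density s z = ennreal (nd s (Re z) * nd s (Im z))"
proof -
  have e: "- (Re z)\<^sup>2 / (2 * (sqrt (s / 2))\<^sup>2) + - (Im z)\<^sup>2 / (2 * (sqrt (s / 2))\<^sup>2) = - (cmod z)\<^sup>2 / s"
    using assms by (simp add: cmod_power2 field_simps)
  have c: "1 / sqrt (2 * pi * (sqrt (s / 2))\<^sup>2) * (1 / sqrt (2 * pi * (sqrt (s / 2))\<^sup>2)) = 1 / (pi * s)"
    using assms by (simp add: real_sqrt_mult[symmetric] field_simps)
  have "nd s (Re z) * nd s (Im z) = (1 / sqrt (2 * pi * (sqrt (s / 2))\<^sup>2) * (1 / sqrt (2 * pi * (sqrt (s / 2))\<^sup>2))) * exp (- (Re z)\<^sup>2 / (2 * (sqrt (s / 2))\<^sup>2) + - (Im z)\<^sup>2 / (2 * (sqrt (s / 2))\<^sup>2))"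
    unfolding nd_def normal_density_def exp_add by simp
  also have "\<dots> = exp (- (cmod z)\<^sup>2 / s) / (pi * s)" unfolding e c by simp
  finally have "nd s (Re z) * nd s (Im z) = exp (- (cmod z)\<^sup>2 / s) / (pi * s)" .
  then show ?thesis by (simp add: cn_density_def)
qed

lemma nd_nonneg: "0 \<le> nd s x" by (simp add: nd_def)

lemma nd_measurable[measurable]: "nd s \<in> borel_measurable borel"
  unfolding nd_def by measurable

lemma cn_transfer:
  fixes h :: "complex \<Rightarrow> complex"
  assumes D: "distributed P lborel Z (cn_density s)" and s: "s > 0" and h[measurable]: "h \<in> borel_measurable borel"
    and hb: "has_bochner_integral lborel (\<lambda>z. complex_of_real (nd s (Re z) * nd s (Im z)) * h z) v"
  shows "integrable P (\<lambda>\<omega>. h (Z \<omega>))" "(\<integral>\<omega>. h (Z \<omega>) \<partial>P) = v"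
proof -
  have Zm: "Z \<in> measurable P lborel" using D by (simp add: distributed_def)
  have "distr P lborel Z = density lborel (\<lambda>z. ennreal (nd s (Re z) * nd s (Im z)))"
  proof -
    have "cn_density s = (\<lambda>z. ennreal (nd s (Re z) * nd s (Im z)))"
      by (rule ext) (rule cn_density_eq[OF s])
    then show ?thesis using D by (simp add: distributed_def)
  qed
  then have dd: "distr P borel Z = density lborel (\<lambda>z. ennreal (nd s (Re z) * nd s (Im z)))"
    by (metis distr_cong sets_lborel)
  have Zm': "Z \<in> measurable P borel" using Zm by simp
  have "integrable lborel (\<lambda>z. (nd s (Re z) * nd s (Im z)) *\<^sub>R h z)"
    using hb by (simp add: has_bochner_integral_iff scaleR_conv_of_real)
  then have "integrable (distr P borel Z) h"
    unfolding dd by (subst integrable_density) (auto simp: nd_nonneg)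
  then show "integrable P (\<lambda>\<omega>. h (Z \<omega>))"
    by (subst integrable_distr_eq[OF Zm' h, symmetric])
  have "(\<integral>\<omega>. h (Z \<omega>) \<partial>P) = integral\<^sup>L (distr P borel Z) h"
    by (rule integral_distr[OF Zm' h, symmetric])
  also have "\<dots> = (\<integral>z. (nd s (Re z) * nd s (Im z)) *\<^sub>R h z \<partial>lborel)"
    unfolding dd by (subst integral_density) (auto simp: nd_nonneg)
  also have "\<dots> = v" using hb by (simp add: has_bochner_integral_iff scaleR_conv_of_real)
  finally show "(\<integral>\<omega>. h (Z \<omega>) \<partial>P) = v" .
qed

lemma cn_hb:
  assumes s: "s > 0" and pq2: "p + q \<le> 2" "q \<le> p"
  shows "has_bochner_integral lborel (\<lambda>z. complex_of_real (nd s (Re z) * nd s (Im z)) * (z ^ p * cnj z ^ q))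
           (if p = q then complex_of_real s ^ p else 0)"
proof -
  note h = nd_hbi[OF s]
  let ?a = "\<lambda>x. complex_of_real (nd s x)"
  let ?b = "\<lambda>x. complex_of_real (x * nd s x)"
  let ?c = "\<lambda>x. complex_of_real (x\<^sup>2 * nd s x)"
  have aa: "has_bochner_integral lborel (\<lambda>z. ?a (Re z) * ?a (Im z)) (1 * 1)"
    by (rule hbi_complex_prod[OF h(1) h(1)])
  have ba: "has_bochner_integral lborel (\<lambda>z. ?b (Re z) * ?a (Im z)) (0 * 1)"
    by (rule hbi_complex_prod[OF h(2) h(1)])
  have ab: "has_bochner_integral lborel (\<lambda>z. ?a (Re z) * (\<i> * ?b (Im z))) (1 * (\<i> * 0))"
    by (rule hbi_complex_prod[OF h(1)]) (rule has_bochner_integral_mult_right, rule h(2))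
  have ca: "has_bochner_integral lborel (\<lambda>z. ?c (Re z) * ?a (Im z)) (complex_of_real (s/2) * 1)"
    by (rule hbi_complex_prod[OF h(3) h(1)])
  have ac: "has_bochner_integral lborel (\<lambda>z. ?a (Re z) * ?c (Im z)) (1 * complex_of_real (s/2))"
    by (rule hbi_complex_prod[OF h(1) h(3)])
  have bb: "has_bochner_integral lborel (\<lambda>z. (2 * \<i> * ?b (Re z)) * ?b (Im z)) ((2 * \<i> * 0) * 0)"
    by (rule hbi_complex_prod[OF _ h(2)]) (rule has_bochner_integral_mult_right, rule h(2))
  have "(p = 0 \<and> q = 0) \<or> (p = 1 \<and> q = 0) \<or> (p = 2 \<and> q = 0) \<or> (p = 1 \<and> q = 1)"
    using pq2 by presburger
  then consider "p = 0" "q = 0" | "p = 1" "q = 0" | "p = 2" "q = 0" | "p = 1" "q = 1"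
    by blast
  then show ?thesis
  proof cases
    case 1
    then show ?thesis using aa by simp
  next
    case 2
    have "has_bochner_integral lborel (\<lambda>z. ?b (Re z) * ?a (Im z) + ?a (Re z) * (\<i> * ?b (Im z))) (0 * 1 + 1 * (\<i> * 0))"
      by (rule has_bochner_integral_add[OF ba ab])
    moreover have "(\<lambda>z. ?b (Re z) * ?a (Im z) + ?a (Re z) * (\<i> * ?b (Im z))) =
        (\<lambda>z. complex_of_real (nd s (Re z) * nd s (Im z)) * (z ^ p * cnj z ^ q))"
      using 2 by (auto simp: fun_eq_iff complex_eq_iff algebra_simps)
    ultimately show ?thesis using 2 by simp
  next
    case 3
    have "has_bochner_integral lborel (\<lambda>z. ?c (Re z) * ?a (Im z) - ?a (Re z) * ?c (Im z) + (2 * \<i> * ?b (Re z)) * ?b (Im z))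
       (complex_of_real (s/2) * 1 - 1 * complex_of_real (s/2) + (2 * \<i> * 0) * 0)"
      by (rule has_bochner_integral_add[OF has_bochner_integral_diff[OF ca ac] bb])
    moreover have "(\<lambda>z. ?c (Re z) * ?a (Im z) - ?a (Re z) * ?c (Im z) + (2 * \<i> * ?b (Re z)) * ?b (Im z)) =
        (\<lambda>z. complex_of_real (nd s (Re z) * nd s (Im z)) * (z ^ p * cnj z ^ q))"
      using 3 by (auto simp: fun_eq_iff complex_eq_iff algebra_simps power2_eq_square)
    ultimately show ?thesis using 3 by simp
  next
    case 4
    have "has_bochner_integral lborel (\<lambda>z. ?c (Re z) * ?a (Im z) + ?a (Re z) * ?c (Im z))
       (complex_of_real (s/2) * 1 + 1 * complex_of_real (s/2))"
      by (rule has_bochner_integral_add[OF ca ac])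
    moreover have "(\<lambda>z. ?c (Re z) * ?a (Im z) + ?a (Re z) * ?c (Im z)) =
        (\<lambda>z. complex_of_real (nd s (Re z) * nd s (Im z)) * (z ^ p * cnj z ^ q))"
      using 4 by (auto simp: fun_eq_iff complex_eq_iff algebra_simps power2_eq_square)
    moreover have "complex_of_real (s/2) * 1 + 1 * complex_of_real (s/2) = complex_of_real s"
      by (simp add: complex_eq_iff)
    ultimately show ?thesis using 4 by simp
  qed
qed

lemma cn_moment:
  assumes D: "distributed P lborel Z (cn_density s)" and s: "s > 0" and pq: "p + q \<le> 2"
  shows "integrable P (\<lambda>\<omega>. Z \<omega> ^ p * cnj (Z \<omega>) ^ q)"
    "(\<integral>\<omega>. Z \<omega> ^ p * cnj (Z \<omega>) ^ q \<partial>P) = (if p = q then complex_of_real s ^ p else 0)"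
proof -
  have m: "(\<lambda>z::complex. z ^ p * cnj z ^ q) \<in> borel_measurable borel" for p q by measurable
  have "integrable P (\<lambda>\<omega>. Z \<omega> ^ p * cnj (Z \<omega>) ^ q) \<and>
    (\<integral>\<omega>. Z \<omega> ^ p * cnj (Z \<omega>) ^ q \<partial>P) = (if p = q then complex_of_real s ^ p else 0)"
  proof (cases "q \<le> p")
    case True
    show ?thesis using cn_transfer[OF D s m cn_hb[OF s pq True]] by simp
  next
    case False
    then have qp: "p \<le> q" "q + p \<le> 2" using pq by auto
    note t = cn_transfer[OF D s m cn_hb[OF s qp(2) qp(1)]]
    have e: "(\<lambda>\<omega>. Z \<omega> ^ p * cnj (Z \<omega>) ^ q) = (\<lambda>\<omega>. cnj (Z \<omega> ^ q * cnj (Z \<omega>) ^ p))"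
      by (simp add: fun_eq_iff mult.commute)
    have i1: "integrable P (\<lambda>\<omega>. cnj (Z \<omega> ^ q * cnj (Z \<omega>) ^ p))"
      using t(1) by (rule integrable_cnj)
    have i2: "(\<integral>\<omega>. cnj (Z \<omega> ^ q * cnj (Z \<omega>) ^ p) \<partial>P) = 0"
      using t(2) False by (subst Bochner_Integration.integral_cnj) simp
    show ?thesis unfolding e using i1 i2 False by auto
  qed
  then show "integrable P (\<lambda>\<omega>. Z \<omega> ^ p * cnj (Z \<omega>) ^ q)"
    "(\<integral>\<omega>. Z \<omega> ^ p * cnj (Z \<omega>) ^ q \<partial>P) = (if p = q then complex_of_real s ^ p else 0)" by auto
qed

lemma prod_pow_delta:
  fixes f :: "'i \<Rightarrow> 'b::comm_monoid_mult"
  assumes "finite J" "x \<in> J"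
  shows "(\<Prod>i\<in>J. f i ^ (if i = x then 1 else 0)) = f x"
proof -
  have "(\<Prod>i\<in>J. f i ^ (if i = x then 1 else 0)) = (\<Prod>i\<in>J. if i = x then f i else 1)"
    by (rule prod.cong) auto
  also have "\<dots> = f x" using assms by simp
  finally show ?thesis .
qed

lemma (in prob_space) quad_moment:
  fixes Z :: "'i \<Rightarrow> 'a \<Rightarrow> complex"
  assumes ind: "indep_vars (\<lambda>_. borel) Z I"
    and D: "\<And>i. i \<in> I \<Longrightarrow> distributed M lborel (Z i) (cn_density s)" and s: "s > 0"
    and abcd: "a \<in> I" "b \<in> I" "c \<in> I" "d \<in> I" "a \<noteq> b" "c \<noteq> d"
  shows "integrable M (\<lambda>\<omega>. cnj (Z a \<omega>) * Z b \<omega> * cnj (cnj (Z c \<omega>) * Z d \<omega>))"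
    "(\<integral>\<omega>. cnj (Z a \<omega>) * Z b \<omega> * cnj (cnj (Z c \<omega>) * Z d \<omega>) \<partial>M) =
       (if a = c \<and> b = d then complex_of_real s ^ 2 else 0)"
proof -
  define J where "J = {a, b, c, d}"
  define cB where "cB i = (if i = b then 1 else 0) + (if i = c then 1 else (0::nat))" for i
  define cA where "cA i = (if i = a then 1 else 0) + (if i = d then 1 else (0::nat))" for i
  define F where "F i \<omega> = Z i \<omega> ^ cB i * cnj (Z i \<omega>) ^ cA i" for i \<omega>
  have fin: "finite J" and JI: "J \<subseteq> I" using abcd by (auto simp: J_def)
  have prodF: "(\<Prod>i\<in>J. F i \<omega>) = cnj (Z a \<omega>) * Z b \<omega> * cnj (cnj (Z c \<omega>) * Z d \<omega>)" for \<omega>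
  proof -
    have "(\<Prod>i\<in>J. F i \<omega>) = (\<Prod>i\<in>J. Z i \<omega> ^ (if i = b then 1 else 0)) * (\<Prod>i\<in>J. Z i \<omega> ^ (if i = c then 1 else 0))
       * ((\<Prod>i\<in>J. cnj (Z i \<omega>) ^ (if i = a then 1 else 0)) * (\<Prod>i\<in>J. cnj (Z i \<omega>) ^ (if i = d then 1 else 0)))"
      unfolding F_def cB_def cA_def power_add prod.distrib by (simp only: mult_ac)
    also have "\<dots> = Z b \<omega> * Z c \<omega> * (cnj (Z a \<omega>) * cnj (Z d \<omega>))"
      using fin by (subst (1 2 3 4) prod_pow_delta) (auto simp: J_def)
    finally show ?thesis by (simp add: mult_ac)
  qed
  have pq: "cB i + cA i \<le> 2" for i using abcd by (auto simp: cB_def cA_def)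
  have indF: "indep_vars (\<lambda>_. borel) F J"
    unfolding F_def
    by (rule indep_vars_compose2[where X=Z and M'="\<lambda>_. borel", OF indep_vars_subset[OF ind JI]]) measurable
  have intF: "integrable M (F i)" if "i \<in> J" for i
    unfolding F_def using cn_moment(1)[OF D[of i] s pq[of i]] that JI by auto
  have EF: "(\<integral>\<omega>. F i \<omega> \<partial>M) = (if cB i = cA i then complex_of_real s ^ cB i else 0)" if "i \<in> J" for i
    using cn_moment(2)[OF D[of i] s pq[of i]] that JI unfolding F_def by auto
  have "integrable M (\<lambda>\<omega>. \<Prod>i\<in>J. F i \<omega>)"
    by (rule indep_vars_integrable[OF fin indF intF])
  then show "integrable M (\<lambda>\<omega>. cnj (Z a \<omega>) * Z b \<omega> * cnj (cnj (Z c \<omega>) * Z d \<omega>))"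
    unfolding prodF .
  have "(\<integral>\<omega>. (\<Prod>i\<in>J. F i \<omega>) \<partial>M) = (\<Prod>i\<in>J. \<integral>\<omega>. F i \<omega> \<partial>M)"
    by (rule indep_vars_lebesgue_integral[OF fin indF intF])
  also have "\<dots> = (\<Prod>i\<in>J. (if cB i = cA i then complex_of_real s ^ cB i else 0))"
    by (rule prod.cong) (auto simp: EF)
  also have "\<dots> = (if a = c \<and> b = d then complex_of_real s ^ 2 else 0)"
  proof (cases "a = c \<and> b = d")
    case True
    then have "J = {a, b}" by (auto simp: J_def)
    then show ?thesis using True abcd by (simp add: cB_def cA_def power2_eq_square)
  next
    case False
    have "\<exists>i\<in>J. cB i \<noteq> cA i"
    proof (cases "a = c")
      case True
      then have "b \<noteq> d" using False by auto
      then show ?thesis using True abcd by (intro bexI[of _ b]) (auto simp: cB_def cA_def J_def)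
    next
      case False
      then show ?thesis using abcd by (intro bexI[of _ a]) (auto simp: cB_def cA_def J_def)
    qed
    then have "(\<Prod>i\<in>J. (if cB i = cA i then complex_of_real s ^ cB i else 0)) = 0"
      using fin by (auto simp: prod_zero_iff)
    then show ?thesis by (simp only: if_not_P[OF False])
  qed
  finally show "(\<integral>\<omega>. cnj (Z a \<omega>) * Z b \<omega> * cnj (cnj (Z c \<omega>) * Z d \<omega>) \<partial>M) =
       (if a = c \<and> b = d then complex_of_real s ^ 2 else 0)"
    unfolding prodF .
qed

lemma (in prob_space) ortho_expand:
  fixes X W :: "'q \<Rightarrow> 'a \<Rightarrow> complex"
  assumes fin: "finite Q"
    and indep: "\<And>q r. q \<in> Q \<Longrightarrow> r \<in> Q \<Longrightarrow>
       indep_var borel (\<lambda>\<omega>. X q \<omega> * cnj (X r \<omega>)) borel (\<lambda>\<omega>. W q \<omega> * cnj (W r \<omega>))"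
    and iX: "\<And>q r. q \<in> Q \<Longrightarrow> r \<in> Q \<Longrightarrow> integrable M (\<lambda>\<omega>. X q \<omega> * cnj (X r \<omega>))"
    and iW: "\<And>q r. q \<in> Q \<Longrightarrow> r \<in> Q \<Longrightarrow> integrable M (\<lambda>\<omega>. W q \<omega> * cnj (W r \<omega>))"
    and EX: "\<And>q r. q \<in> Q \<Longrightarrow> r \<in> Q \<Longrightarrow> (\<integral>\<omega>. X q \<omega> * cnj (X r \<omega>) \<partial>M) = (if q = r then complex_of_real v else 0)"
  shows "integrable M (\<lambda>\<omega>. (cmod (\<Sum>q\<in>Q. W q \<omega> * X q \<omega>))\<^sup>2)"
    "(\<integral>\<omega>. (cmod (\<Sum>q\<in>Q. W q \<omega> * X q \<omega>))\<^sup>2 \<partial>M) = v * (\<Sum>q\<in>Q. \<integral>\<omega>. (cmod (W q \<omega>))\<^sup>2 \<partial>M)"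
proof -
  have eq: "complex_of_real ((cmod (\<Sum>q\<in>Q. W q \<omega> * X q \<omega>))\<^sup>2) =
      (\<Sum>q\<in>Q. \<Sum>r\<in>Q. (X q \<omega> * cnj (X r \<omega>)) * (W q \<omega> * cnj (W r \<omega>)))" for \<omega>
    by (simp only: complex_norm_square) (simp add: sum_distrib_left sum_distrib_right mult_ac, rule sum.swap)
  have ip: "integrable M (\<lambda>\<omega>. (X q \<omega> * cnj (X r \<omega>)) * (W q \<omega> * cnj (W r \<omega>)))" if "q \<in> Q" "r \<in> Q" for q r
    by (rule indep_var_integrable[OF indep[OF that] iX[OF that] iW[OF that]])
  have ip2: "integrable M (\<lambda>\<omega>. complex_of_real ((cmod (\<Sum>q\<in>Q. W q \<omega> * X q \<omega>))\<^sup>2))"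
    unfolding eq using ip by (auto intro!: Bochner_Integration.integrable_sum)
  then show "integrable M (\<lambda>\<omega>. (cmod (\<Sum>q\<in>Q. W q \<omega> * X q \<omega>))\<^sup>2)"
    by (simp only: complex_of_real_integrable_eq)
  have iWW: "integrable M (\<lambda>\<omega>. (cmod (W q \<omega>))\<^sup>2)" if "q \<in> Q" for q
  proof -
    have "integrable M (\<lambda>\<omega>. complex_of_real ((cmod (W q \<omega>))\<^sup>2))"
      using iW[OF that that] by (simp only: complex_norm_square)
    then show ?thesis by (simp only: complex_of_real_integrable_eq)
  qed
  have "complex_of_real (\<integral>\<omega>. (cmod (\<Sum>q\<in>Q. W q \<omega> * X q \<omega>))\<^sup>2 \<partial>M) =
     (\<integral>\<omega>. complex_of_real ((cmod (\<Sum>q\<in>Q. W q \<omega> * X q \<omega>))\<^sup>2) \<partial>M)"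
    by (rule integral_complex_of_real[symmetric])
  also have "\<dots> = (\<Sum>q\<in>Q. \<Sum>r\<in>Q. \<integral>\<omega>. (X q \<omega> * cnj (X r \<omega>)) * (W q \<omega> * cnj (W r \<omega>)) \<partial>M)"
    unfolding eq using ip
    by (simp add: Bochner_Integration.integral_sum Bochner_Integration.integrable_sum)
  also have "\<dots> = (\<Sum>q\<in>Q. \<Sum>r\<in>Q. (\<integral>\<omega>. X q \<omega> * cnj (X r \<omega>) \<partial>M) * (\<integral>\<omega>. W q \<omega> * cnj (W r \<omega>) \<partial>M))"
    by (intro sum.cong refl indep_var_lebesgue_integral indep iX iW) auto
  also have "\<dots> = (\<Sum>q\<in>Q. complex_of_real v * (\<integral>\<omega>. W q \<omega> * cnj (W q \<omega>) \<partial>M))"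
  proof -
    have "(\<Sum>q\<in>Q. \<Sum>r\<in>Q. (\<integral>\<omega>. X q \<omega> * cnj (X r \<omega>) \<partial>M) * (\<integral>\<omega>. W q \<omega> * cnj (W r \<omega>) \<partial>M))
       = (\<Sum>q\<in>Q. \<Sum>r\<in>Q. if r = q then complex_of_real v * (\<integral>\<omega>. W q \<omega> * cnj (W r \<omega>) \<partial>M) else 0)"
      by (intro sum.cong refl) (auto simp: EX)
    also have "\<dots> = (\<Sum>q\<in>Q. complex_of_real v * (\<integral>\<omega>. W q \<omega> * cnj (W q \<omega>) \<partial>M))"
      using fin by (intro sum.cong refl) simp
    finally show ?thesis .
  qed
  also have "\<dots> = (\<Sum>q\<in>Q. complex_of_real v * complex_of_real (\<integral>\<omega>. (cmod (W q \<omega>))\<^sup>2 \<partial>M))"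
  proof -
    have "(\<integral>\<omega>. W q \<omega> * cnj (W q \<omega>) \<partial>M) = complex_of_real (\<integral>\<omega>. (cmod (W q \<omega>))\<^sup>2 \<partial>M)" for q
      by (simp only: complex_norm_square[symmetric] integral_complex_of_real)
    then show ?thesis by simp
  qed
  also have "\<dots> = complex_of_real (v * (\<Sum>q\<in>Q. \<integral>\<omega>. (cmod (W q \<omega>))\<^sup>2 \<partial>M))"
    by (simp add: sum_distrib_left)
  finally show "(\<integral>\<omega>. (cmod (\<Sum>q\<in>Q. W q \<omega> * X q \<omega>))\<^sup>2 \<partial>M) = v * (\<Sum>q\<in>Q. \<integral>\<omega>. (cmod (W q \<omega>))\<^sup>2 \<partial>M)"
    by (simp only: of_real_eq_iff)
qed

lemma W_bound:
  fixes a C K s2 bb b1 b2 x y :: real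
  assumes a: "0 \<le> a" "a \<le> C" and pos: "K > 0" "s2 > 0" "bb > 0" "b1 \<ge> 0" "b2 \<ge> 0"
  shows "(cmod (complex_of_real (sqrt b1 * sqrt b2 / (K * (C * s2 * bb))) *
           (complex_of_real a * (complex_of_real x + \<i> * complex_of_real y))))\<^sup>2
         \<le> b1 * b2 / (K\<^sup>2 * s2\<^sup>2 * bb\<^sup>2) * (x\<^sup>2 + y\<^sup>2)"
proof -
  define r where "r = sqrt b1 * sqrt b2 / (K * (C * s2 * bb))"
  define R where "R = b1 * b2 / (K\<^sup>2 * s2\<^sup>2 * bb\<^sup>2)"
  have R0: "R \<ge> 0" using pos by (simp add: R_def)
  have e: "(cmod (complex_of_real r * (complex_of_real a * (complex_of_real x + \<i> * complex_of_real y))))\<^sup>2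
      = r\<^sup>2 * a\<^sup>2 * (x\<^sup>2 + y\<^sup>2)"
    by (simp add: cmod_power2 power_mult_distrib algebra_simps)
  show ?thesis
  proof (cases "C = 0")
    case True
    then have "a = 0" using a by simp
    then show ?thesis using e R0 unfolding r_def R_def[symmetric] by (simp add: mult_nonneg_nonneg)
  next
    case False
    then have Cp: "C > 0" using a by simp
    have r2: "r\<^sup>2 * a\<^sup>2 = R * (a / C)\<^sup>2"
      using pos Cp unfolding r_def R_def
      by (simp add: power_mult_distrib power_divide real_sqrt_pow2 field_simps)
    have "(a / C)\<^sup>2 \<le> 1" using a Cp by (simp add: power_le_one)
    then have "r\<^sup>2 * a\<^sup>2 \<le> R" unfolding r2 using R0 by (simp add: mult_left_le)
    then have "r\<^sup>2 * a\<^sup>2 * (x\<^sup>2 + y\<^sup>2) \<le> R * (x\<^sup>2 + y\<^sup>2)"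
      by (rule mult_right_mono) simp
    then show ?thesis using e unfolding r_def R_def by simp
  qed
qed

lemma (in prob_space) vimage_sigma_mono:
  assumes X: "X \<in> measurable M MX" and f: "f \<in> measurable MX N"
  shows "sigma_sets (space M) {(\<lambda>\<omega>. f (X \<omega>)) -` A \<inter> space M |A. A \<in> sets N} \<subseteq>
         sigma_sets (space M) {X -` A \<inter> space M |A. A \<in> sets MX}"
proof (rule sigma_sets_subseteq, safe)
  fix A assume A: "A \<in> sets N"
  have "(\<lambda>\<omega>. f (X \<omega>)) -` A \<inter> space M = X -` (f -` A \<inter> space MX) \<inter> space M"
    using X by (auto simp: measurable_def)
  moreover have "f -` A \<inter> space MX \<in> sets MX" using f A by (rule measurable_sets)
  ultimately show "\<exists>B. (\<lambda>\<omega>. f (X \<omega>)) -` A \<inter> space M = X -` B \<inter> space M \<and> B \<in> sets MX" by blast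
qed

lemma (in prob_space) indep_set_compose:
  assumes ind: "indep_set (sigma_sets (space M) {X -` A \<inter> space M | A. A \<in> sets MX})
                           (sigma_sets (space M) {Y -` A \<inter> space M | A. A \<in> sets MY})"
    and X: "X \<in> measurable M MX" and Y: "Y \<in> measurable M MY"
    and f: "f \<in> measurable MX N" and h: "h \<in> measurable MY N"
  shows "indep_var N (\<lambda>\<omega>. f (X \<omega>)) N (\<lambda>\<omega>. h (Y \<omega>))"
  unfolding indep_var_eq
proof (intro conjI)
  show "random_variable N (\<lambda>\<omega>. f (X \<omega>))" using X f by (rule measurable_compose)
  show "random_variable N (\<lambda>\<omega>. h (Y \<omega>))" using Y h by (rule measurable_compose)
  show "indep_set (sigma_sets (space M) {(\<lambda>\<omega>. f (X \<omega>)) -` A \<inter> space M |A. A \<in> sets N})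
     (sigma_sets (space M) {(\<lambda>\<omega>. h (Y \<omega>)) -` A \<inter> space M |A. A \<in> sets N})"
    using ind unfolding indep_set_def
    by (rule indep_sets_mono_sets) (auto split: bool.split intro: vimage_sigma_mono[OF X f, THEN subsetD] vimage_sigma_mono[OF Y h, THEN subsetD])
qed

lemma sum_split2N:
  fixes f :: "nat \<Rightarrow> 'b::comm_monoid_add"
  shows "(\<Sum>i=1..2*N. f i) = (\<Sum>n=1..N. f n + f (n + N))"
proof -
  have "(\<Sum>i=1..2*N. f i) = (\<Sum>i=1..N + N. f i)" by (simp add: mult_2)
  also have "\<dots> = (\<Sum>i=1..N. f i) + (\<Sum>i=N + 1..N + N. f i)"
    by (rule sum.ub_add_nat) simp
  also have "(\<Sum>i=N + 1..N + N. f i) = (\<Sum>i=1 + N..N + N. f i)" by (simp add: add.commute)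
  also have "\<dots> = (\<Sum>i=1..N. f (i + N))" by (rule sum.shift_bounds_cl_nat_ivl)
  finally show ?thesis by (simp add: sum.distrib)
qed

theorem lemma5:
  fixes P :: "'a measure"
    and M K N :: nat and S :: "nat set"
    and s2 \<beta>bar :: real and \<beta> p :: "nat \<Rightarrow> real"
    and \<theta> :: "nat \<Rightarrow> nat \<Rightarrow> 'a \<Rightarrow> real"
    and c :: "nat \<Rightarrow> 'a \<Rightarrow> nat"
    and g :: "nat \<Rightarrow> nat \<Rightarrow> nat \<Rightarrow> 'a \<Rightarrow> complex"
  assumes "prob_space P"
    and "M \<ge> 1" "K \<ge> 1" "N \<ge> 1"
    and "S \<subseteq> {1..M}" "S \<noteq> {}"
    and "s2 > 0" "\<beta>bar > 0" "\<And>m. m \<in> S \<Longrightarrow> \<beta> m > 0"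
    and "\<And>m. m \<in> S \<Longrightarrow> p m > 0"
    and "\<And>m i. m \<in> S \<Longrightarrow> i \<in> {1..2*N} \<Longrightarrow> \<theta> m i \<in> borel_measurable P"
    and "\<And>m i. m \<in> S \<Longrightarrow> i \<in> {1..2*N} \<Longrightarrow> integrable P (\<lambda>\<omega>. (\<theta> m i \<omega>)\<^sup>2)"
    and "\<And>m. m \<in> S \<Longrightarrow> c m \<in> measurable P (count_space UNIV)"
    and "\<And>m \<omega>. m \<in> S \<Longrightarrow> \<omega> \<in> space P \<Longrightarrow> c m \<omega> \<ge> 1"
    and "\<And>m k n. m \<in> S \<Longrightarrow> k \<in> {1..K} \<Longrightarrow> n \<in> {1..N} \<Longrightarrow>
           distributed P lborel (g m k n) (cn_density s2)"
    and "prob_space.indep_vars P (\<lambda>_. borel) (\<lambda>(m, k, n). g m k n) (S \<times> {1..K} \<times> {1..N})"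
    and "prob_space.indep_set P
           (sigma_sets (space P)
              {(\<lambda>\<omega>. restrict (\<lambda>(m, k, n). g m k n \<omega>) (S \<times> {1..K} \<times> {1..N})) -` A \<inter> space P
                | A. A \<in> sets (PiM (S \<times> {1..K} \<times> {1..N}) (\<lambda>_. borel))})
           (sigma_sets (space P)
              {(\<lambda>\<omega>. (restrict (\<lambda>(m, i). \<theta> m i \<omega>) (S \<times> {1..2*N}), restrict (\<lambda>m. c m \<omega>) S)) -` A \<inter> space P
                | A. A \<in> sets ((PiM (S \<times> {1..2*N}) (\<lambda>_. borel)) \<Otimes>\<^sub>M (PiM S (\<lambda>_. count_space UNIV)))})"
  shows "(\<Sum>n=1..2*N. \<integral>\<^sup>+ \<omega>. ennreal ((est S K N s2 \<beta>bar \<beta> p c \<theta> g n \<omega>)\<^sup>2) \<partial>P)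
         \<le> ennreal (\<Sum>m\<in>S. \<Sum>m'\<in>S - {m}.
               \<beta> m * \<beta> m' / (real K * \<beta>bar\<^sup>2) *
               prob_space.expectation P (\<lambda>\<omega>. \<Sum>i=1..2*N. (\<theta> m' i \<omega>)\<^sup>2))"
proof -
  interpret prob_space P by fact
  have finS: "finite S" using assms(5) finite_subset by blast
  have Kpos: "real K > 0" using assms(3) by simp
  define I where "I = S \<times> {1..K} \<times> {1..N}"
  define J where "J = S \<times> {1..2*N}"
  define G where "G = (\<lambda>\<omega>. restrict (\<lambda>(m, k, n). g m k n \<omega>) I)"
  define T where "T = (\<lambda>\<omega>. (restrict (\<lambda>(m, i). \<theta> m i \<omega>) J, restrict (\<lambda>m. c m \<omega>) S))"
  define MG where "MG = Pi\<^sub>M I (\<lambda>_. (borel :: complex measure))"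
  define MT where "MT = (Pi\<^sub>M J (\<lambda>_. (borel::real measure))) \<Otimes>\<^sub>M (Pi\<^sub>M S (\<lambda>_. count_space (UNIV::nat set)))"
  have gm: "g m k n \<in> borel_measurable P" if "m \<in> S" "k \<in> {1..K}" "n \<in> {1..N}" for m k n
    using distributed_measurable[OF assms(15)[OF that]] by simp
  have Gm: "G \<in> measurable P MG"
    unfolding G_def MG_def by (rule measurable_restrict) (auto simp: I_def intro: gm)
  have Tm: "T \<in> measurable P MT"
    unfolding T_def MT_def
    by (intro measurable_Pair measurable_restrict) (auto simp: J_def intro: assms(11) assms(13))
  have indGT: "indep_var borel (\<lambda>\<omega>. f1 (G \<omega>)) borel (\<lambda>\<omega>. f2 (T \<omega>))"
    if "f1 \<in> borel_measurable MG" "f2 \<in> borel_measurable MT" for f1 f2 :: "_ \<Rightarrow> complex"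
    by (rule indep_set_compose[OF _ Gm Tm that]) (use assms(17) in \<open>simp add: G_def T_def MG_def MT_def I_def J_def\<close>)
  define Ct where "Ct t = (\<Sum>m\<in>S. p m * real (snd t m))" for t :: "(nat \<times> nat \<Rightarrow> real) \<times> (nat \<Rightarrow> nat)"
  define Wt where "Wt n q t = (case q of (m, m', k) \<Rightarrow>
     complex_of_real (sqrt (\<beta> m) * sqrt (\<beta> m') / (real K * (Ct t * s2 * \<beta>bar))) *
     (complex_of_real (p m' * real (snd t m')) * (complex_of_real (fst t (m', n)) + \<i> * complex_of_real (fst t (m', n + N)))))"
    for n :: nat and q :: "nat \<times> nat \<times> nat" and t
  define Xg where "Xg n q x = (case q of (m, m', k) \<Rightarrow> cnj (x (m, k, n)) * x (m', k, n))"
    for n :: nat and q :: "nat \<times> nat \<times> nat" and x :: "nat \<times> nat \<times> nat \<Rightarrow> complex"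
  define Q where "Q = (SIGMA m:S. (S - {m}) \<times> {1..K})"
  define Y where "Y n \<omega> = (\<Sum>q\<in>Q. Wt n q (T \<omega>) * Xg n q (G \<omega>))" for n \<omega>
  have finQ: "finite Q" unfolding Q_def using finS by auto
  have cm: "(\<lambda>t. real (snd t m)) \<in> borel_measurable MT" if "m \<in> S" for m
  proof -
    have "(\<lambda>t. snd t m) \<in> measurable MT (count_space UNIV)"
      unfolding MT_def using that by measurable
    moreover have "real \<in> borel_measurable (count_space (UNIV::nat set))" by simp
    ultimately show ?thesis by (rule measurable_compose)
  qed
  have Ctm[measurable]: "Ct \<in> borel_measurable MT"
    unfolding Ct_def by (rule borel_measurable_sum) (intro borel_measurable_times borel_measurable_const cm)
  have Wtm[measurable]: "Wt n q \<in> borel_measurable MT" if qQ: "q \<in> Q" and nN: "n \<in> {1..N}" for n q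
  proof -
    obtain m m' k where q: "q = (m, m', k)" "m' \<in> S" using qQ by (auto simp: Q_def)
    have J1: "(m', n) \<in> J" "(m', n + N) \<in> J" using q nN by (auto simp: J_def)
    have [measurable]: "(\<lambda>t. fst t (m', n)) \<in> borel_measurable MT" "(\<lambda>t. fst t (m', n + N)) \<in> borel_measurable MT"
      unfolding MT_def using J1 by measurable
    have [measurable]: "(\<lambda>t. real (snd t m')) \<in> borel_measurable MT" using cm q by simp
    show ?thesis unfolding Wt_def q prod.case by measurable
  qed
  have Xgm[measurable]: "Xg n q \<in> borel_measurable MG" if qQ: "q \<in> Q" and nN: "n \<in> {1..N}" for n q
  proof -
    obtain m m' k where q: "q = (m, m', k)" "m \<in> S" "m' \<in> S" "k \<in> {1..K}" using qQ by (auto simp: Q_def)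
    have "(m, k, n) \<in> I" "(m', k, n) \<in> I" using q nN by (auto simp: I_def)
    then show ?thesis unfolding Xg_def q prod.case MG_def by measurable
  qed
  have Ym[measurable]: "Y n \<in> borel_measurable P" if "n \<in> {1..N}" for n
    unfolding Y_def using that
    by (intro borel_measurable_sum borel_measurable_times measurable_compose[OF Tm Wtm] measurable_compose[OF Gm Xgm]) auto
  have Yeq: "est S K N s2 \<beta>bar \<beta> p c \<theta> g n \<omega> = Re (Y n \<omega>) \<and> est S K N s2 \<beta>bar \<beta> p c \<theta> g (n + N) \<omega> = Im (Y n \<omega>)"
    if nN: "n \<in> {1..N}" for n \<omega>
  proof -
    define D where "D = Ctot S p c \<omega> * s2 * \<beta>bar"
    have TC: "Ct (T \<omega>) = Ctot S p c \<omega>"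
      unfolding Ct_def T_def Ctot_def by (intro sum.cong) auto
    have Teval: "fst (T \<omega>) (m', i) = \<theta> m' i \<omega>" if "m' \<in> S" "i \<in> {1..2*N}" for m' i
      using that by (auto simp: T_def J_def)
    have Teval2: "snd (T \<omega>) m' = c m' \<omega>" if "m' \<in> S" for m'
      using that by (auto simp: T_def)
    have Geval: "G \<omega> (m, k, n) = g m k n \<omega>" if "m \<in> S" "k \<in> {1..K}" for m k
      using that nN by (auto simp: G_def I_def)
    have trm: "1 / of_nat K * (cnj (chan \<beta> g m k n \<omega>) * chan \<beta> g m' k n \<omega> * sym_cx N p c \<theta> m' n \<omega>) * complex_of_real (1 / D)
        = Wt n (m, m', k) (T \<omega>) * Xg n (m, m', k) (G \<omega>)"
      if "m \<in> S" "m' \<in> S" "k \<in> {1..K}" for m m' k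
    proof -
      have "n \<in> {1..2*N}" "n + N \<in> {1..2*N}" using nN by auto
      then show ?thesis
        using that unfolding Wt_def Xg_def chan_def sym_cx_def prod.case D_def
        by (simp add: Teval Teval2 Geval TC divide_inverse inverse_mult_distrib mult_ac)
    qed
    have ys: "y_int S K N \<beta> p c \<theta> g n \<omega> * complex_of_real (1 / D) = Y n \<omega>"
    proof -
      have "y_int S K N \<beta> p c \<theta> g n \<omega> * complex_of_real (1 / D) =
        (\<Sum>m\<in>S. \<Sum>m'\<in>S - {m}. \<Sum>k=1..K. 1 / of_nat K * (cnj (chan \<beta> g m k n \<omega>) * chan \<beta> g m' k n \<omega> * sym_cx N p c \<theta> m' n \<omega>) * complex_of_real (1 / D))"
        unfolding y_int_def by (simp only: sum_distrib_left sum_distrib_right)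
      also have "\<dots> = (\<Sum>m\<in>S. \<Sum>m'\<in>S - {m}. \<Sum>k=1..K. Wt n (m, m', k) (T \<omega>) * Xg n (m, m', k) (G \<omega>))"
        by (intro sum.cong refl trm) auto
      also have "\<dots> = (\<Sum>m\<in>S. \<Sum>q\<in>(S - {m}) \<times> {1..K}. Wt n (m, q) (T \<omega>) * Xg n (m, q) (G \<omega>))"
        by (intro sum.cong refl) (simp add: sum.cartesian_product case_prod_beta)
      also have "\<dots> = Y n \<omega>"
        unfolding Y_def Q_def using finS by (subst sum.Sigma) auto
      finally show ?thesis .
    qed
    have "\<not> n + N \<le> N" using nN by auto
    then have e2: "est S K N s2 \<beta>bar \<beta> p c \<theta> g (n + N) \<omega> = Im (y_int S K N \<beta> p c \<theta> g n \<omega>) / D"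
      unfolding est_def D_def by simp
    have e1: "est S K N s2 \<beta>bar \<beta> p c \<theta> g n \<omega> = Re (y_int S K N \<beta> p c \<theta> g n \<omega>) / D"
      using nN unfolding est_def D_def by simp
    have r1: "Re (z * complex_of_real r) = Re z * r" "Im (z * complex_of_real r) = Im z * r" for z r by simp_all
    show ?thesis unfolding e1 e2 ys[symmetric] r1 by simp
  qed
  define bq where "bq q = (case q of (m, m', k) \<Rightarrow> \<beta> m * \<beta> m' / ((real K)\<^sup>2 * s2\<^sup>2 * \<beta>bar\<^sup>2))" for q :: "nat \<times> nat \<times> nat"
  define Bq where "Bq n q \<omega> = (case q of (m, m', k) \<Rightarrow> bq q * ((\<theta> m' n \<omega>)\<^sup>2 + (\<theta> m' (n + N) \<omega>)\<^sup>2))" for n q \<omega>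
  have WB: "(cmod (Wt n q (T \<omega>)))\<^sup>2 \<le> Bq n q \<omega>" if qQ: "q \<in> Q" and nN: "n \<in> {1..N}" for n q \<omega>
  proof -
    obtain m m' k where q: "q = (m, m', k)" "m \<in> S" "m' \<in> S" using qQ by (auto simp: Q_def)
    have TC: "Ct (T \<omega>) = Ctot S p c \<omega>"
      unfolding Ct_def T_def Ctot_def by (intro sum.cong) auto
    have i: "n \<in> {1..2*N}" "n + N \<in> {1..2*N}" using nN by auto
    have Te: "fst (T \<omega>) (m', n) = \<theta> m' n \<omega>" "fst (T \<omega>) (m', n + N) = \<theta> m' (n + N) \<omega>" "snd (T \<omega>) m' = c m' \<omega>"
      using q i by (auto simp: T_def J_def)
    have a0: "0 \<le> p m' * real (c m' \<omega>)" using assms(10)[of m'] q by simp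
    have aC: "p m' * real (c m' \<omega>) \<le> Ctot S p c \<omega>"
    proof -
      have pn: "0 \<le> p x * real (c x \<omega>)" if "x \<in> S" for x
        by (metis assms(10)[OF that] less_eq_real_def mult_nonneg_nonneg of_nat_0_le_iff)
      show ?thesis unfolding Ctot_def using q finS pn by (intro member_le_sum) auto
    qed
    show ?thesis
      unfolding Wt_def Bq_def bq_def q prod.case TC Te
      by (rule W_bound[OF a0 aC Kpos assms(7) assms(8)]) (use q assms(9) in \<open>auto intro: less_imp_le\<close>)
  qed
  have Bqm: "Bq n q \<in> borel_measurable P" if qQ: "q \<in> Q" and nN: "n \<in> {1..N}" for n q
  proof -
    obtain m m' k where q: "q = (m, m', k)" "m' \<in> S" using qQ by (auto simp: Q_def)
    have [measurable]: "\<theta> m' n \<in> borel_measurable P" "\<theta> m' (n + N) \<in> borel_measurable P"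
      using assms(11) q nN by auto
    show ?thesis unfolding Bq_def q prod.case by measurable
  qed
  have Bqi: "integrable P (Bq n q)" if qQ: "q \<in> Q" and nN: "n \<in> {1..N}" for n q
  proof -
    obtain m m' k where q: "q = (m, m', k)" "m' \<in> S" using qQ by (auto simp: Q_def)
    have "integrable P (\<lambda>\<omega>. (\<theta> m' n \<omega>)\<^sup>2)" "integrable P (\<lambda>\<omega>. (\<theta> m' (n + N) \<omega>)\<^sup>2)"
      using assms(12) q nN by auto
    then show ?thesis unfolding Bq_def q prod.case by auto
  qed
  have Bq_int: "(\<integral>\<omega>. Bq n q \<omega> \<partial>P) = bq q * ((\<integral>\<omega>. (\<theta> (fst (snd q)) n \<omega>)\<^sup>2 \<partial>P) + (\<integral>\<omega>. (\<theta> (fst (snd q)) (n + N) \<omega>)\<^sup>2 \<partial>P))"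
    if qQ: "q \<in> Q" and nN: "n \<in> {1..N}" for n q
  proof -
    obtain m m' k where q: "q = (m, m', k)" "m' \<in> S" using qQ by (auto simp: Q_def)
    have "integrable P (\<lambda>\<omega>. (\<theta> m' n \<omega>)\<^sup>2)" "integrable P (\<lambda>\<omega>. (\<theta> m' (n + N) \<omega>)\<^sup>2)"
      using assms(12) q nN by auto
    then show ?thesis unfolding Bq_def q prod.case by simp
  qed
  have iWq: "integrable P (\<lambda>\<omega>. (cmod (Wt n q (T \<omega>)))\<^sup>2)" if qQ: "q \<in> Q" and nN: "n \<in> {1..N}" for n q
  proof (rule Bochner_Integration.integrable_bound[OF Bqi[OF qQ nN]])
    show "(\<lambda>\<omega>. (cmod (Wt n q (T \<omega>)))\<^sup>2) \<in> borel_measurable P"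
      using measurable_compose[OF Tm Wtm[OF qQ nN]] by measurable
    show "AE \<omega> in P. norm ((cmod (Wt n q (T \<omega>)))\<^sup>2) \<le> norm (Bq n q \<omega>)"
      using WB[OF qQ nN] by (auto intro: order_trans[OF _ abs_ge_self])
  qed
  have iW: "integrable P (\<lambda>\<omega>. Wt n q (T \<omega>) * cnj (Wt n r (T \<omega>)))"
    if qQ: "q \<in> Q" and rQ: "r \<in> Q" and nN: "n \<in> {1..N}" for n q r
  proof (rule Bochner_Integration.integrable_bound[OF Bochner_Integration.integrable_add[OF Bqi[OF qQ nN] Bqi[OF rQ nN]]])
    show "(\<lambda>\<omega>. Wt n q (T \<omega>) * cnj (Wt n r (T \<omega>))) \<in> borel_measurable P"
      using measurable_compose[OF Tm Wtm[OF qQ nN]] measurable_compose[OF Tm Wtm[OF rQ nN]] by measurable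
    show "AE \<omega> in P. norm (Wt n q (T \<omega>) * cnj (Wt n r (T \<omega>))) \<le> norm (Bq n q \<omega> + Bq n r \<omega>)"
    proof (intro AE_I2)
      fix \<omega>
      define a where "a = cmod (Wt n q (T \<omega>))"
      define b where "b = cmod (Wt n r (T \<omega>))"
      have e: "a\<^sup>2 + b\<^sup>2 = 2 * (a * b) + (a - b)\<^sup>2" by (simp add: power2_eq_square algebra_simps)
      have "0 \<le> a * b" unfolding a_def b_def by simp
      then have "a * b \<le> a\<^sup>2 + b\<^sup>2" unfolding e using zero_le_power2[of "a - b"] by linarith
      also have "\<dots> \<le> Bq n q \<omega> + Bq n r \<omega>" unfolding a_def b_def using WB[OF qQ nN, of \<omega>] WB[OF rQ nN, of \<omega>] by (rule add_mono)
      finally show "norm (Wt n q (T \<omega>) * cnj (Wt n r (T \<omega>))) \<le> norm (Bq n q \<omega> + Bq n r \<omega>)"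
        unfolding a_def b_def by (simp add: norm_mult)
    qed
  qed
  have indZ: "indep_vars (\<lambda>_. borel) (\<lambda>(m, k, n). g m k n) I" using assms(16) unfolding I_def .
  have DZ: "distributed P lborel ((\<lambda>(m, k, n). g m k n) i) (cn_density s2)" if "i \<in> I" for i
    using assms(15) that by (auto simp: I_def)
  have XX: "integrable P (\<lambda>\<omega>. Xg n q (G \<omega>) * cnj (Xg n r (G \<omega>))) \<and>
      (\<integral>\<omega>. Xg n q (G \<omega>) * cnj (Xg n r (G \<omega>)) \<partial>P) = (if q = r then complex_of_real (s2\<^sup>2) else 0)"
    if qQ: "q \<in> Q" and rQ: "r \<in> Q" and nN: "n \<in> {1..N}" for n q r
  proof -
    obtain m m' k where q0: "q = (m, m', k)" by (metis prod_cases3)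
    then have q: "q = (m, m', k)" "m \<in> S" "m' \<in> S" "m \<noteq> m'" "k \<in> {1..K}" using qQ by (auto simp: Q_def)
    obtain l l' k' where r0: "r = (l, l', k')" by (metis prod_cases3)
    then have r: "r = (l, l', k')" "l \<in> S" "l' \<in> S" "l \<noteq> l'" "k' \<in> {1..K}" using rQ by (auto simp: Q_def)
    have mem: "(m, k, n) \<in> I" "(m', k, n) \<in> I" "(l, k', n) \<in> I" "(l', k', n) \<in> I"
      using q r nN by (auto simp: I_def)
    have eq: "(\<lambda>\<omega>. Xg n q (G \<omega>) * cnj (Xg n r (G \<omega>))) =
      (\<lambda>\<omega>. cnj ((\<lambda>(m, k, n). g m k n) (m, k, n) \<omega>) * (\<lambda>(m, k, n). g m k n) (m', k, n) \<omega> *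
            cnj (cnj ((\<lambda>(m, k, n). g m k n) (l, k', n) \<omega>) * (\<lambda>(m, k, n). g m k n) (l', k', n) \<omega>))"
      using mem unfolding Xg_def q r G_def by simp
    have cond: "((m, k, n) = (l, k', n) \<and> (m', k, n) = (l', k', n)) \<longleftrightarrow> q = r" using q r by auto
    note qm = quad_moment[OF indZ DZ assms(7) mem, simplified cond]
    show ?thesis unfolding eq using qm q r by simp
  qed
  have indXW: "indep_var borel (\<lambda>\<omega>. Xg n q (G \<omega>) * cnj (Xg n r (G \<omega>))) borel (\<lambda>\<omega>. Wt n q (T \<omega>) * cnj (Wt n r (T \<omega>)))"
    if qQ: "q \<in> Q" and rQ: "r \<in> Q" and nN: "n \<in> {1..N}" for n q r
  proof (rule indGT)
    show "(\<lambda>x. Xg n q x * cnj (Xg n r x)) \<in> borel_measurable MG"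
      using Xgm[OF qQ nN] Xgm[OF rQ nN] by measurable
    show "(\<lambda>t. Wt n q t * cnj (Wt n r t)) \<in> borel_measurable MT"
      using Wtm[OF qQ nN] Wtm[OF rQ nN] by measurable
  qed
  define bnd where "bnd n = (\<Sum>m\<in>S. \<Sum>m'\<in>S - {m}. \<beta> m * \<beta> m' / (real K * \<beta>bar\<^sup>2) *
      ((\<integral>\<omega>. (\<theta> m' n \<omega>)\<^sup>2 \<partial>P) + (\<integral>\<omega>. (\<theta> m' (n + N) \<omega>)\<^sup>2 \<partial>P)))" for n
  have Ybound: "integrable P (\<lambda>\<omega>. (cmod (Y n \<omega>))\<^sup>2) \<and> (\<integral>\<omega>. (cmod (Y n \<omega>))\<^sup>2 \<partial>P) \<le> bnd n"
    if nN: "n \<in> {1..N}" for n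
  proof -
    note oe = ortho_expand[where X="\<lambda>q \<omega>. Xg n q (G \<omega>)" and W="\<lambda>q \<omega>. Wt n q (T \<omega>)" and v="s2\<^sup>2" and Q=Q,
        OF finQ indXW[OF _ _ nN] conjunct1[OF XX[OF _ _ nN]] iW[OF _ _ nN] conjunct2[OF XX[OF _ _ nN]]]
    have Yd: "Y n \<omega> = (\<Sum>q\<in>Q. Wt n q (T \<omega>) * Xg n q (G \<omega>))" for \<omega> by (simp add: Y_def)
    have "(\<integral>\<omega>. (cmod (Y n \<omega>))\<^sup>2 \<partial>P) = s2\<^sup>2 * (\<Sum>q\<in>Q. \<integral>\<omega>. (cmod (Wt n q (T \<omega>)))\<^sup>2 \<partial>P)"
      unfolding Yd by (rule oe(2))
    also have "\<dots> \<le> s2\<^sup>2 * (\<Sum>q\<in>Q. \<integral>\<omega>. Bq n q \<omega> \<partial>P)"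
      by (intro mult_left_mono sum_mono integral_mono iWq Bqi WB nN) auto
    also have "\<dots> = (\<Sum>q\<in>Q. s2\<^sup>2 * (bq q * ((\<integral>\<omega>. (\<theta> (fst (snd q)) n \<omega>)\<^sup>2 \<partial>P) + (\<integral>\<omega>. (\<theta> (fst (snd q)) (n + N) \<omega>)\<^sup>2 \<partial>P))))"
      unfolding sum_distrib_left by (rule sum.cong[OF refl]) (metis Bq_int nN)
    also have "\<dots> = bnd n"
    proof -
      have "(\<Sum>q\<in>Q. s2\<^sup>2 * (bq q * ((\<integral>\<omega>. (\<theta> (fst (snd q)) n \<omega>)\<^sup>2 \<partial>P) + (\<integral>\<omega>. (\<theta> (fst (snd q)) (n + N) \<omega>)\<^sup>2 \<partial>P))))
        = (\<Sum>m\<in>S. \<Sum>q\<in>(S - {m}) \<times> {1..K}. s2\<^sup>2 * (bq (m, q) * ((\<integral>\<omega>. (\<theta> (fst q) n \<omega>)\<^sup>2 \<partial>P) + (\<integral>\<omega>. (\<theta> (fst q) (n + N) \<omega>)\<^sup>2 \<partial>P))))"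
        unfolding Q_def using finS by (subst sum.Sigma) (auto simp: case_prod_beta)
      also have "\<dots> = (\<Sum>m\<in>S. \<Sum>m'\<in>S - {m}. \<Sum>k\<in>{1..K}. s2\<^sup>2 * (bq (m, m', k) * ((\<integral>\<omega>. (\<theta> m' n \<omega>)\<^sup>2 \<partial>P) + (\<integral>\<omega>. (\<theta> m' (n + N) \<omega>)\<^sup>2 \<partial>P))))"
        by (intro sum.cong refl) (simp add: sum.cartesian_product case_prod_beta)
      also have "\<dots> = bnd n"
        unfolding bnd_def bq_def using Kpos assms(7) assms(8)
        by (intro sum.cong refl) (simp add: power2_eq_square field_simps)
      finally show ?thesis .
    qed
    finally show ?thesis using oe(1) unfolding Yd by simp
  qed
  have bnd0: "0 \<le> bnd n" for n
    unfolding bnd_def using assms(8) assms(9)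
    by (intro sum_nonneg mult_nonneg_nonneg add_nonneg_nonneg integral_nonneg_AE divide_nonneg_nonneg)
       (auto intro: less_imp_le)
  have Esum: "(\<integral>\<omega>. (\<Sum>i=1..2*N. (\<theta> m' i \<omega>)\<^sup>2) \<partial>P) = (\<Sum>n=1..N. (\<integral>\<omega>. (\<theta> m' n \<omega>)\<^sup>2 \<partial>P) + (\<integral>\<omega>. (\<theta> m' (n + N) \<omega>)\<^sup>2 \<partial>P))"
    if mS: "m' \<in> S" for m'
  proof -
    have "(\<integral>\<omega>. (\<Sum>i=1..2*N. (\<theta> m' i \<omega>)\<^sup>2) \<partial>P) = (\<Sum>i=1..2*N. (\<integral>\<omega>. (\<theta> m' i \<omega>)\<^sup>2 \<partial>P))"
      by (rule Bochner_Integration.integral_sum) (use assms(12) mS in auto)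
    also have "\<dots> = (\<Sum>n=1..N. (\<integral>\<omega>. (\<theta> m' n \<omega>)\<^sup>2 \<partial>P) + (\<integral>\<omega>. (\<theta> m' (n + N) \<omega>)\<^sup>2 \<partial>P))"
      by (rule sum_split2N)
    finally show ?thesis .
  qed
  have bsum: "(\<Sum>n=1..N. bnd n) = (\<Sum>m\<in>S. \<Sum>m'\<in>S - {m}. \<beta> m * \<beta> m' / (real K * \<beta>bar\<^sup>2) *
       (\<integral>\<omega>. (\<Sum>i=1..2*N. (\<theta> m' i \<omega>)\<^sup>2) \<partial>P))"
  proof -
    have "(\<Sum>n=1..N. bnd n) = (\<Sum>m\<in>S. \<Sum>n=1..N. \<Sum>m'\<in>S - {m}. \<beta> m * \<beta> m' / (real K * \<beta>bar\<^sup>2) *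
      ((\<integral>\<omega>. (\<theta> m' n \<omega>)\<^sup>2 \<partial>P) + (\<integral>\<omega>. (\<theta> m' (n + N) \<omega>)\<^sup>2 \<partial>P)))"
      unfolding bnd_def by (rule sum.swap)
    also have "\<dots> = (\<Sum>m\<in>S. \<Sum>m'\<in>S - {m}. \<Sum>n=1..N. \<beta> m * \<beta> m' / (real K * \<beta>bar\<^sup>2) *
      ((\<integral>\<omega>. (\<theta> m' n \<omega>)\<^sup>2 \<partial>P) + (\<integral>\<omega>. (\<theta> m' (n + N) \<omega>)\<^sup>2 \<partial>P)))"
      by (rule sum.cong[OF refl], rule sum.swap)
    also have "\<dots> = (\<Sum>m\<in>S. \<Sum>m'\<in>S - {m}. \<beta> m * \<beta> m' / (real K * \<beta>bar\<^sup>2) *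
       (\<integral>\<omega>. (\<Sum>i=1..2*N. (\<theta> m' i \<omega>)\<^sup>2) \<partial>P))"
      apply (rule sum.cong[OF refl], rule sum.cong[OF refl])
      subgoal for m m' by (subst Esum) (auto simp: sum_distrib_left)
      done
    finally show ?thesis .
  qed
  have "(\<Sum>n=1..2*N. \<integral>\<^sup>+ \<omega>. ennreal ((est S K N s2 \<beta>bar \<beta> p c \<theta> g n \<omega>)\<^sup>2) \<partial>P)
      = (\<Sum>n=1..N. (\<integral>\<^sup>+ \<omega>. ennreal ((est S K N s2 \<beta>bar \<beta> p c \<theta> g n \<omega>)\<^sup>2) \<partial>P)
                   + (\<integral>\<^sup>+ \<omega>. ennreal ((est S K N s2 \<beta>bar \<beta> p c \<theta> g (n + N) \<omega>)\<^sup>2) \<partial>P))"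
    by (rule sum_split2N)
  also have "\<dots> \<le> (\<Sum>n=1..N. ennreal (bnd n))"
  proof (rule sum_mono)
    fix n assume nN: "n \<in> {1..N}"
    note [measurable] = Ym[OF nN]
    have "(\<integral>\<^sup>+ \<omega>. ennreal ((est S K N s2 \<beta>bar \<beta> p c \<theta> g n \<omega>)\<^sup>2) \<partial>P)
                   + (\<integral>\<^sup>+ \<omega>. ennreal ((est S K N s2 \<beta>bar \<beta> p c \<theta> g (n + N) \<omega>)\<^sup>2) \<partial>P)
       = (\<integral>\<^sup>+ \<omega>. ennreal ((Re (Y n \<omega>))\<^sup>2) \<partial>P) + (\<integral>\<^sup>+ \<omega>. ennreal ((Im (Y n \<omega>))\<^sup>2) \<partial>P)"
      using Yeq[OF nN] by simp
    also have "\<dots> = (\<integral>\<^sup>+ \<omega>. ennreal ((Re (Y n \<omega>))\<^sup>2) + ennreal ((Im (Y n \<omega>))\<^sup>2) \<partial>P)"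
      by (rule nn_integral_add[symmetric]) measurable
    also have "\<dots> = (\<integral>\<^sup>+ \<omega>. ennreal ((cmod (Y n \<omega>))\<^sup>2) \<partial>P)"
      by (intro nn_integral_cong) (simp add: cmod_power2)
    also have "\<dots> = ennreal (\<integral>\<omega>. (cmod (Y n \<omega>))\<^sup>2 \<partial>P)"
      using Ybound[OF nN] by (intro nn_integral_eq_integral) auto
    also have "\<dots> \<le> ennreal (bnd n)" using Ybound[OF nN] by (simp add: ennreal_leI)
    finally show "(\<integral>\<^sup>+ \<omega>. ennreal ((est S K N s2 \<beta>bar \<beta> p c \<theta> g n \<omega>)\<^sup>2) \<partial>P)
                   + (\<integral>\<^sup>+ \<omega>. ennreal ((est S K N s2 \<beta>bar \<beta> p c \<theta> g (n + N) \<omega>)\<^sup>2) \<partial>P) \<le> ennreal (bnd n)" .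
  qed
  also have "\<dots> = ennreal (\<Sum>n=1..N. bnd n)" using bnd0 by simp
  finally show ?thesis unfolding bsum .
qed

end
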